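(* Let $g$ be a meromorphic function on the Riemann sphere $\mathbb{C}\cup\{\infty\}$, with $|g|\not\equiv 1$, whose set of distinct poles is $\{p_1,\dots,p_n\}$. Then there exists a holomorphic $1$-form $\omega$ on $M=\mathbb{C}\cup\{\infty\}\setminus\{p_1,\dots,p_n\}$ such that $(g,\omega)$ is the Weierstrass data of a maximal map $X:M\to\mathbb{E}^3_1$ all of whose $n$ ends $p_1,\dots,p_n$ are complete. In other words, there is a complete maximal map with $n$ complete ends whose Gauss map is $g$.
   Context: $\mathbb{E}^3_1$ denotes $\mathbb{R}^3$ with the Lorentzian metric $dx^2+dy^2-dz^2$. Weierstrass data and maximal maps: let $M$ be a Riemann surface, $g$ a meromorphic function on $M$ and $\omega$ a holomorphic $1$-form on $M$ such that (i) whenever $p$ is a pole of $g$ of order $k$, $\omega$ has a zero of order at least $2k$ at $p$; (ii) $|g|\not\equiv 1$; (iii) $\mathrm{Re}\oint_\gamma\big((1+g^2)\omega,\ i(1-g^2)\omega,\ -2g\omega\big)=0$ for every closed loop $\gamma$ in $M$ (the period condition). The maximal map with Weierstrass data $(g,\omega)$ is $X(p)=\mathrm{Re}\int_{p_0}^{p}\big((1+g^2)\omega,\ i(1-g^2)\omega,\ -2g\omega\big)$, and $g$ is called its Gauss map. Its induced metric is $ds^2=(1-|g|^2)^2|\omega|^2$. The singularity set is $\{p\in M:|g(p)|=1\}$ and the branch points are the zeros of $\omega$. A maximal map defined on $\overline{M}\setminus\{p_1,\dots,p_n\}$ ($\overline{M}$ compact) is called complete (and the $p_i$ are called complete ends)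 if $g$ and $\omega$ extend meromorphically to each $p_i$, $|g(p_i)|\neq 1$ for all $i$, and the metric $ds^2$ is complete at each end $p_i$. *)

theory Defs
  imports "HOL-Complex_Analysis.Complex_Analysis" "HOL-Probability.Probability"
begin

text \<open>The Riemann sphere is modelled by the affine chart z (points of the complex
plane) together with the point at infinity, handled through the chart w = 1/z.
A meromorphic function on the sphere is a function g :: complex => complex which is
meromorphic on the whole plane, holomorphic (analytic) away from its poles, and
meromorphic at infinity, i.e. w |-> g(1/w) is meromorphic at w = 0.
Values of g at its poles are irrelevant junk.\<close>

definition pole_at_inf :: "(complex \<Rightarrow> complex) \<Rightarrow> bool" where
  "pole_at_inf g \<longleftrightarrow> is_pole (\<lambda>w. g (inverse w)) 0"

definition meromorphic_on_sphere :: "(complex \<Rightarrow> complex) \<Rightarrow> bool" where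
  "meromorphic_on_sphere g \<longleftrightarrow>
     g meromorphic_on UNIV \<and> g analytic_on {z. \<not> is_pole g z} \<and>
     (\<lambda>w. g (inverse w)) meromorphic_on {0}"

text \<open>A 1-form omega is represented by its coefficient f in the chart z: omega = f(z) dz.
In the chart w = 1/z at infinity, omega = chart_inf f (w) dw.\<close>

definition chart_inf :: "(complex \<Rightarrow> complex) \<Rightarrow> complex \<Rightarrow> complex" where
  "chart_inf f w = - f (inverse w) / w ^ 2"

text \<open>M = sphere minus the poles of g.  Its finite part is {z. not is_pole g z};
infinity belongs to M iff infinity is not a pole of g.
Holomorphic 1-form on M: holomorphic in the chart z on the finite part, and (if infinity
is in M) holomorphic at w = 0 in the chart w, i.e. the isolated singularity of
chart_inf f at 0 is removable.\<close>

definition holomorphic_form_on_M :: "(complex \<Rightarrow> complex) \<Rightarrow> (complex \<Rightarrow> complex) \<Rightarrow> bool" where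
  "holomorphic_form_on_M g f \<longleftrightarrow>
     f analytic_on {z. \<not> is_pole g z} \<and>
     (\<not> pole_at_inf g \<longrightarrow> (\<exists>c. (chart_inf f \<longlongrightarrow> c) (at 0)))"

definition period_condition :: "(complex \<Rightarrow> complex) \<Rightarrow> (complex \<Rightarrow> complex) \<Rightarrow> bool" where
  "period_condition g f \<longleftrightarrow>
     (\<forall>\<gamma>. valid_path \<gamma> \<and> pathfinish \<gamma> = pathstart \<gamma> \<and> path_image \<gamma> \<subseteq> {z. \<not> is_pole g z} \<longrightarrow>
        Re (contour_integral \<gamma> (\<lambda>z. (1 + (g z)\<^sup>2) * f z)) = 0 \<and>
        Re (contour_integral \<gamma> (\<lambda>z. \<i> * (1 - (g z)\<^sup>2) * f z)) = 0 \<and>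
        Re (contour_integral \<gamma> (\<lambda>z. - 2 * g z * f z)) = 0)"

text \<open>(g, omega) is the Weierstrass data of a maximal map on M = sphere minus poles of g:
omega holomorphic on M, |g| not identically 1 on M, and the period condition.
(Condition (i) is vacuous, since g has no poles in M.)\<close>

definition weierstrass_data_on_M :: "(complex \<Rightarrow> complex) \<Rightarrow> (complex \<Rightarrow> complex) \<Rightarrow> bool" where
  "weierstrass_data_on_M g f \<longleftrightarrow>
     holomorphic_form_on_M g f \<and>
     (\<exists>z. \<not> is_pole g z \<and> cmod (g z) \<noteq> 1) \<and>
     period_condition g f"

text \<open>Length of a curve gamma : [0,1) -> M in the induced metric
ds = |1 - |g|^2| |omega| (the metric is chart independent).\<close>

definition metric_length :: "(complex \<Rightarrow> complex) \<Rightarrow> (complex \<Rightarrow> complex) \<Rightarrow> (real \<Rightarrow> complex) \<Rightarrow> ennreal" where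
  "metric_length g f \<gamma> =
     (\<integral>\<^sup>+ t. indicator {0..<1} t *
        ennreal (\<bar>1 - (cmod (g (\<gamma> t)))\<^sup>2\<bar> * cmod (f (\<gamma> t)) * norm (vector_derivative \<gamma> (at t)))
      \<partial>lborel)"

text \<open>The metric is complete at the end described by the filter F (nhds p for a finite
pole p, at_infinity for the point infinity): every piecewise smooth curve in M that
diverges to the end has infinite length.  (Such a curve eventually lies in the finite part
of M, so only curves there are considered.)\<close>

definition complete_at_end :: "(complex \<Rightarrow> complex) \<Rightarrow> (complex \<Rightarrow> complex) \<Rightarrow> complex filter \<Rightarrow> bool" where
  "complete_at_end g f F \<longleftrightarrow>
     (\<forall>\<gamma>. (\<forall>b<1. \<gamma> piecewise_C1_differentiable_on {0..b}) \<and>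
          \<gamma> ` {0..<1} \<subseteq> {z. \<not> is_pole g z} \<and> filterlim \<gamma> F (at_left 1)
          \<longrightarrow> metric_length g f \<gamma> = \<infinity>)"

text \<open>All ends (= poles of g) are complete ends: omega extends meromorphically to each end,
|g(p_i)| = infinity is automatically different from 1, and the metric is complete there.\<close>

definition all_ends_complete :: "(complex \<Rightarrow> complex) \<Rightarrow> (complex \<Rightarrow> complex) \<Rightarrow> bool" where
  "all_ends_complete g f \<longleftrightarrow>
     (\<forall>p. is_pole g p \<longrightarrow> f meromorphic_on {p} \<and> complete_at_end g f (nhds p)) \<and>
     (pole_at_inf g \<longrightarrow> chart_inf f meromorphic_on {0} \<and> complete_at_end g f at_infinity)"

end

theory Submission
  imports Defs
begin

lemma nn_norm_bound:
  fixes h' :: "real \<Rightarrow> complex"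
  assumes hi: "(h' has_integral D) {a..b}"
  shows "ennreal (norm D) \<le> (\<integral>\<^sup>+t. indicator {a..b} t * ennreal (norm (h' t)) \<partial>lborel)"
proof -
  define N where "N = (\<lambda>t. if t \<in> {a..b} then norm (h' t) else 0)"
  have int: "h' integrable_on {a..b}" using hi by blast
  have meas: "h' \<in> borel_measurable (lebesgue_on {a..b})" by (rule integrable_imp_measurable[OF int])
  have "(\<lambda>t. norm (h' t)) \<in> borel_measurable (lebesgue_on {a..b})"
    using meas by measurable
  then have Nmeas: "N \<in> borel_measurable lebesgue"
    unfolding N_def by (subst borel_measurable_if) auto
  have Nnn: "\<And>t. 0 \<le> N t" by (simp add: N_def)
  have eq: "(\<integral>\<^sup>+t. indicator {a..b} t * ennreal (norm (h' t)) \<partial>lborel) = (\<integral>\<^sup>+t. ennreal (N t) \<partial>lborel)"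
    by (intro nn_integral_cong) (auto simp: N_def indicator_def)
  show ?thesis
  proof (cases "(\<integral>\<^sup>+t. ennreal (N t) \<partial>lborel) = \<infinity>")
    case True then show ?thesis using eq by simp
  next
    case False
    then obtain r where r: "(\<integral>\<^sup>+t. ennreal (N t) \<partial>lborel) = ennreal r" "0 \<le> r"
      by (cases "(\<integral>\<^sup>+t. ennreal (N t) \<partial>lborel)") auto
    have "(\<integral>\<^sup>+t. ennreal (N t) \<partial>lebesgue) = ennreal r"
      using r by (simp add: nn_integral_completion)
    then have "(N has_integral r) UNIV"
      using Nmeas r(2) by (subst has_integral_iff_nn_integral_lebesgue) (auto simp: Nnn)
    then have Ni: "((\<lambda>t. norm (h' t)) has_integral r) {a..b}"
      unfolding N_def by (simp only: has_integral_restrict_UNIV)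
    have "norm (integral {a..b} h') \<le> integral {a..b} (\<lambda>t. norm (h' t))"
      by (rule integral_norm_bound_integral) (use int Ni in auto)
    then have "norm D \<le> r" using hi Ni by (simp add: integral_unique)
    then show ?thesis using eq r by simp
  qed
qed


lemma complete_if_tends:
  fixes g :: "complex \<Rightarrow> complex" and \<gamma> :: "real \<Rightarrow> complex"
  assumes ana: "g analytic_on {z. \<not> is_pole g z}"
    and pc: "\<forall>b<1. \<gamma> piecewise_C1_differentiable_on {0..b}"
    and img: "\<gamma> ` {0..<1} \<subseteq> {z. \<not> is_pole g z}"
    and lim: "filterlim (\<lambda>t. g (\<gamma> t)) at_infinity (at_left 1)"
  shows "metric_length g (deriv g) \<gamma> = \<infinity>"
proof (rule ccontr)
  define M where "M = {z. \<not> is_pole g z}"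
  define \<phi> where "\<phi> = (\<lambda>t. \<bar>1 - (cmod (g (\<gamma> t)))\<^sup>2\<bar> * cmod (deriv g (\<gamma> t)) * norm (vector_derivative \<gamma> (at t)))"
  define h where "h = (\<lambda>t. g (\<gamma> t) ^ 3 / 4)"
  define h' where "h' = (\<lambda>t. vector_derivative \<gamma> (at t) * (3/4 * g (\<gamma> t) ^ 2 * deriv g (\<gamma> t)))"
  assume "metric_length g (deriv g) \<gamma> \<noteq> \<infinity>"
  then obtain r where r: "metric_length g (deriv g) \<gamma> = ennreal r" "0 \<le> r"
    by (cases "metric_length g (deriv g) \<gamma>") auto
  have "eventually (\<lambda>t. 2 \<le> norm (g (\<gamma> t))) (at_left 1)"
    using lim by (auto simp: filterlim_at_infinity[of 0])
  then obtain t0 where t0: "t0 < 1" "\<And>y. t0 < y \<Longrightarrow> y < 1 \<Longrightarrow> 2 \<le> norm (g (\<gamma> y))"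
    by (auto simp: eventually_at_left_field)
  define a where "a = max 0 ((t0 + 1) / 2)"
  have a: "0 \<le> a" "a < 1" "t0 < a" using t0(1) by (auto simp: a_def max_def)
  have bound: "norm (h b - h a) \<le> r" if b: "a \<le> b" "b < 1" for b
  proof -
    have "\<gamma> piecewise_C1_differentiable_on {0..b}" using pc b by auto
    then obtain S D where S: "finite S" "continuous_on {0..b} \<gamma>"
      "\<And>x. x \<in> {0..b} - S \<Longrightarrow> (\<gamma> has_vector_derivative D x) (at x)"
      unfolding piecewise_C1_differentiable_on_def C1_differentiable_on_def by blast
    have inM: "\<gamma> t \<in> M" if "0 \<le> t" "t < 1" for t using img that unfolding M_def by force
    have gana: "g analytic_on {\<gamma> t}" if "0 \<le> t" "t < 1" for t
      using ana inM[OF that] by (auto simp: M_def intro: analytic_on_subset)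
    have "(h' has_integral (h b - h a)) {a..b}"
    proof (rule fundamental_theorem_of_calculus_interior_strong[OF S(1) b(1)])
      fix x assume x: "x \<in> {a<..<b} - S"
      then have x01: "0 \<le> x" "x < 1" using a b by auto
      have Dx: "(\<gamma> has_vector_derivative D x) (at x)" using S(3) x a by auto
      then have vd: "vector_derivative \<gamma> (at x) = D x" by (rule vector_derivative_at)
      have gd: "(g has_field_derivative deriv g (\<gamma> x)) (at (\<gamma> x))"
        by (rule analytic_derivI[OF gana[OF x01]])
      have "((\<lambda>z. g z ^ 3 / 4) has_field_derivative (3/4 * g (\<gamma> x) ^ 2 * deriv g (\<gamma> x))) (at (\<gamma> x))"
        using gd by (auto intro!: derivative_eq_intros simp: field_simps)
      from field_vector_diff_chain_at[OF Dx this]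
      show "(h has_vector_derivative h' x) (at x)"
        by (simp add: h_def h'_def vd o_def)
    next
      have "continuous_on M g"
        using ana unfolding M_def
        by (simp add: analytic_imp_holomorphic holomorphic_on_imp_continuous_on)
      then have "continuous_on M (\<lambda>z. g z ^ 3 / 4)" by (intro continuous_intros) auto
      moreover have "continuous_on {a..b} \<gamma>" using S(2) by (rule continuous_on_subset) (use a in auto)
      moreover have "\<gamma> ` {a..b} \<subseteq> M" using inM a b by auto
      ultimately show "continuous_on {a..b} h" unfolding h_def
        by (rule continuous_on_compose2[of M "\<lambda>z. g z ^ 3 / 4"])
    qed
    then have "ennreal (norm (h b - h a)) \<le> (\<integral>\<^sup>+t. indicator {a..b} t * ennreal (norm (h' t)) \<partial>lborel)"
      by (rule nn_norm_bound)
    also have "\<dots> \<le> (\<integral>\<^sup>+t. indicator {0..<1} t * ennreal (\<phi> t) \<partial>lborel)"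
    proof (intro nn_integral_mono)
      fix t :: real
      show "indicator {a..b} t * ennreal (norm (h' t)) \<le> indicator {0..<1} t * ennreal (\<phi> t)"
      proof (cases "t \<in> {a..b}")
        case True
        then have t: "0 \<le> t" "t < 1" "t0 < t" using a b by auto
        have g2: "2 \<le> norm (g (\<gamma> t))" using t0(2)[OF t(3) t(2)] .
        have "3/4 * (norm (g (\<gamma> t)))^2 \<le> \<bar>1 - (cmod (g (\<gamma> t)))\<^sup>2\<bar>"
        proof -
          have "4 \<le> (norm (g (\<gamma> t)))^2" using g2
            using power_mono[OF g2, of 2] by simp
          then show ?thesis by linarith
        qed
        then have "3/4 * (norm (g (\<gamma> t)))^2 * (cmod (deriv g (\<gamma> t)) * norm (vector_derivative \<gamma> (at t)))
             \<le> \<bar>1 - (cmod (g (\<gamma> t)))\<^sup>2\<bar> * (cmod (deriv g (\<gamma> t)) * norm (vector_derivative \<gamma> (at t)))"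
          by (rule mult_right_mono) auto
        then have "norm (h' t) \<le> \<phi> t"
          by (simp add: h'_def \<phi>_def norm_mult norm_power mult_ac)
        then show ?thesis using True t by (auto simp: indicator_def intro: ennreal_leI)
      qed (auto simp: indicator_def)
    qed
    also have "\<dots> = ennreal r" using r(1) by (simp add: metric_length_def \<phi>_def)
    finally show ?thesis using r(2) by simp
  qed
  define R where "R = 4 * (r + norm (h a)) + 1"
  have "eventually (\<lambda>t. R \<le> norm (g (\<gamma> t))) (at_left 1)"
  proof -
    have "R > 0" using r(2) by (simp add: R_def add_nonneg_pos)
    then show ?thesis using lim by (simp add: filterlim_at_infinity[of 0])
  qed
  moreover have "eventually (\<lambda>t. t \<in> {a<..<1}) (at_left (1::real))"
    using a by (intro eventually_at_left_real) auto
  ultimately have "eventually (\<lambda>t. R \<le> norm (g (\<gamma> t)) \<and> t \<in> {a<..<1}) (at_left (1::real))"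
    by (rule eventually_conj)
  from eventually_happens[OF this] obtain b where b: "R \<le> norm (g (\<gamma> b))" "a < b" "b < 1"
    using trivial_limit_at_left_real by auto
  have R1: "1 \<le> R" using r(2) by (simp add: R_def)
  have "R \<le> R ^ 3" using power_increasing[of 1 3 R] R1 by simp
  also have "R ^ 3 \<le> norm (g (\<gamma> b)) ^ 3" using b(1) R1 by (intro power_mono) auto
  also have "\<dots> = 4 * norm (h b)" by (simp add: h_def norm_divide norm_power)
  also have "\<dots> \<le> 4 * (norm (h b - h a) + norm (h a))" using norm_triangle_ineq[of "h b - h a" "h a"] by simp
  also have "\<dots> \<le> 4 * (r + norm (h a))" using bound[of b] b by simp
  finally show False by (simp add: R_def)
qed


lemma ev_analytic:
  assumes "isolated_singularity_at f z"
  shows "eventually (\<lambda>w. f analytic_on {w} \<and> w \<noteq> z) (at z)"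
proof -
  from assms obtain r where r: "r > 0" "f analytic_on ball z r - {z}"
    by (auto simp: isolated_singularity_at_def)
  have "eventually (\<lambda>w. w \<in> ball z r - {z}) (at z)"
    using r by (intro eventually_at_in_open) auto
  then show ?thesis
    by eventually_elim (use r in \<open>auto intro: analytic_on_subset\<close>)
qed

lemma chart_deriv:
  fixes g :: "complex \<Rightarrow> complex"
  assumes "w \<noteq> 0" "(\<lambda>w. g (inverse w)) analytic_on {w}"
  shows "chart_inf (deriv g) w = deriv (\<lambda>w. g (inverse w)) w"
proof -
  define q where "q = (\<lambda>w. g (inverse w))"
  have geq: "g = (\<lambda>z. q (inverse z))" by (simp add: q_def)
  have qd: "(q has_field_derivative deriv q w) (at (inverse (inverse w)))"
    using analytic_derivI[OF assms(2)[folded q_def]] by simp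
  have id: "(inverse has_field_derivative - (inverse (inverse w) ^ Suc (Suc 0))) (at (inverse w))"
    using assms(1) by (intro DERIV_inverse) simp
  have "((\<lambda>z. q (inverse z)) has_field_derivative deriv q w * - (inverse (inverse w) ^ Suc (Suc 0))) (at (inverse w))"
    by (rule DERIV_chain2[OF qd id])
  then have "deriv g (inverse w) = deriv q w * - (w ^ 2)"
    unfolding geq by (simp add: DERIV_imp_deriv power2_eq_square)
  then show ?thesis using assms(1) by (simp add: chart_inf_def q_def)
qed

theorem mainTheorem1:
  fixes g :: "complex \<Rightarrow> complex"
  assumes "meromorphic_on_sphere g"
    and "\<exists>z. \<not> is_pole g z \<and> cmod (g z) \<noteq> 1"
  shows "\<exists>f. weierstrass_data_on_M g f \<and> all_ends_complete g f"
proof -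
  define M where "M = {z. \<not> is_pole g z}"
  define q where "q = (\<lambda>w. g (inverse w))"
  have mer: "g meromorphic_on UNIV" and ana: "g analytic_on M" and qmer: "q meromorphic_on {0}"
    using assms(1) by (auto simp: meromorphic_on_sphere_def M_def q_def)
  have qiso: "isolated_singularity_at q 0" and qne: "not_essential q 0"
    using qmer by (auto simp: meromorphic_at_iff)
  have evq: "eventually (\<lambda>w. chart_inf (deriv g) w = deriv q w) (at 0)"
    using ev_analytic[OF qiso] by eventually_elim (auto simp: q_def chart_deriv)
  have gd: "(g has_field_derivative deriv g x) (at x within M)" if "x \<in> M" for x
    using ana that by (intro analytic_derivI) (auto intro: analytic_on_subset)
  have hol: "holomorphic_form_on_M g (deriv g)"
    unfolding holomorphic_form_on_M_def
  proof (intro conjI impI)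
    show "deriv g analytic_on {z. \<not> is_pole g z}" using analytic_deriv[OF ana] by (simp add: M_def)
    assume "\<not> pole_at_inf g"
    then have np: "\<not> is_pole q 0" by (simp add: pole_at_inf_def q_def)
    then obtain c where c: "q \<midarrow>0\<rightarrow> c" using qne by (auto simp: not_essential_def)
    define Q where "Q = remove_sings q"
    have "Q analytic_on {0}" unfolding Q_def by (rule remove_sings_analytic_at[OF qiso c])
    then have "isCont (deriv Q) 0" by (intro analytic_at_imp_isCont analytic_deriv)
    then have lim: "deriv Q \<midarrow>0\<rightarrow> deriv Q 0" by (simp add: isCont_def)
    have "eventually (\<lambda>w. deriv Q w = chart_inf (deriv g) w) (at 0)"
      using ev_analytic[OF qiso] evq by eventually_elim (auto simp: Q_def)
    then have "chart_inf (deriv g) \<midarrow>0\<rightarrow> deriv Q 0"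
      using Lim_transform_eventually[OF lim] by blast
    then show "\<exists>c. (chart_inf (deriv g) \<longlongrightarrow> c) (at 0)" by blast
  qed
  have per: "period_condition g (deriv g)"
    unfolding period_condition_def
  proof (intro allI impI conjI)
    fix \<gamma> assume \<gamma>: "valid_path \<gamma> \<and> pathfinish \<gamma> = pathstart \<gamma> \<and> path_image \<gamma> \<subseteq> {z. \<not> is_pole g z}"
    then have v: "valid_path \<gamma>" "path_image \<gamma> \<subseteq> M" "pathfinish \<gamma> = pathstart \<gamma>" by (auto simp: M_def)
    have "((\<lambda>z. (1 + (g z)\<^sup>2) * deriv g z) has_contour_integral 0) \<gamma>"
    proof (rule Cauchy_theorem_primitive[OF _ v])
      fix x assume "x \<in> M"
      from gd[OF this] show "((\<lambda>z. g z + g z ^ 3 / 3) has_field_derivative (1 + (g x)\<^sup>2) * deriv g x) (at x within M)"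
        by (auto intro!: derivative_eq_intros simp: field_simps power2_eq_square)
    qed
    then show "Re (contour_integral \<gamma> (\<lambda>z. (1 + (g z)\<^sup>2) * deriv g z)) = 0"
      using contour_integral_unique by simp
    have "((\<lambda>z. \<i> * (1 - (g z)\<^sup>2) * deriv g z) has_contour_integral 0) \<gamma>"
    proof (rule Cauchy_theorem_primitive[OF _ v])
      fix x assume "x \<in> M"
      from gd[OF this] show "((\<lambda>z. \<i> * (g z - g z ^ 3 / 3)) has_field_derivative \<i> * (1 - (g x)\<^sup>2) * deriv g x) (at x within M)"
        by (auto intro!: derivative_eq_intros simp: field_simps power2_eq_square)
    qed
    then show "Re (contour_integral \<gamma> (\<lambda>z. \<i> * (1 - (g z)\<^sup>2) * deriv g z)) = 0"
      using contour_integral_unique by simp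
    have "((\<lambda>z. - 2 * g z * deriv g z) has_contour_integral 0) \<gamma>"
    proof (rule Cauchy_theorem_primitive[OF _ v])
      fix x assume "x \<in> M"
      from gd[OF this] show "((\<lambda>z. - (g z ^ 2)) has_field_derivative - 2 * g x * deriv g x) (at x within M)"
        by (auto intro!: derivative_eq_intros simp: field_simps power2_eq_square)
    qed
    then show "Re (contour_integral \<gamma> (\<lambda>z. - 2 * g z * deriv g z)) = 0"
      using contour_integral_unique by simp
  qed
  have ev01: "eventually (\<lambda>t. t \<in> {0<..<(1::real)}) (at_left 1)"
    by (rule eventually_at_left_real) simp
  have ends: "all_ends_complete g (deriv g)"
    unfolding all_ends_complete_def
  proof (intro conjI allI impI)
    fix p assume p: "is_pole g p"
    show "deriv g meromorphic_on {p}"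
      using meromorphic_on_deriv[OF mer] by (rule meromorphic_on_subset) auto
    show "complete_at_end g (deriv g) (nhds p)"
      unfolding complete_at_end_def
    proof (intro allI impI)
      fix \<gamma> :: "real \<Rightarrow> complex"
      assume h: "(\<forall>b<1. \<gamma> piecewise_C1_differentiable_on {0..b}) \<and>
          \<gamma> ` {0..<1} \<subseteq> {z. \<not> is_pole g z} \<and> filterlim \<gamma> (nhds p) (at_left 1)"
      have "eventually (\<lambda>t. \<gamma> t \<noteq> p) (at_left 1)"
        using ev01 by eventually_elim (use h p in force)
      then have "filterlim \<gamma> (at p) (at_left 1)" using h by (intro filterlim_atI) auto
      then have "filterlim (\<lambda>t. g (\<gamma> t)) at_infinity (at_left 1)"
        using p unfolding is_pole_def by (rule filterlim_compose[rotated])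
      then show "metric_length g (deriv g) \<gamma> = \<infinity>"
        using h ana by (intro complete_if_tends) (auto simp: M_def)
    qed
  next
    assume pi: "pole_at_inf g"
    have "deriv q meromorphic_on {0}" using qmer by (rule meromorphic_on_deriv)
    then show "chart_inf (deriv g) meromorphic_on {0}"
      using meromorphic_on_cong[of "{0}" "chart_inf (deriv g)" "deriv q" "{0}"] evq by blast
    show "complete_at_end g (deriv g) at_infinity"
      unfolding complete_at_end_def
    proof (intro allI impI)
      fix \<gamma> :: "real \<Rightarrow> complex"
      assume h: "(\<forall>b<1. \<gamma> piecewise_C1_differentiable_on {0..b}) \<and>
          \<gamma> ` {0..<1} \<subseteq> {z. \<not> is_pole g z} \<and> filterlim \<gamma> at_infinity (at_left 1)"
      have l0: "filterlim (\<lambda>t. inverse (\<gamma> t)) (nhds 0) (at_left 1)"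
        using filterlim_compose[OF tendsto_inverse_0, of \<gamma> "at_left 1"] h by blast
      have "eventually (\<lambda>t. \<gamma> t \<noteq> 0) (at_left 1)"
        using h filterlim_at_infinity_imp_eventually_ne by blast
      then have "eventually (\<lambda>t. inverse (\<gamma> t) \<noteq> 0) (at_left 1)" by eventually_elim simp
      with l0 have "filterlim (\<lambda>t. inverse (\<gamma> t)) (at 0) (at_left 1)" by (intro filterlim_atI)
      moreover have "filterlim q at_infinity (at 0)"
        using pi by (simp add: pole_at_inf_def q_def is_pole_def)
      ultimately have "filterlim (\<lambda>t. q (inverse (\<gamma> t))) at_infinity (at_left 1)"
        by (rule filterlim_compose[rotated])
      then have "filterlim (\<lambda>t. g (\<gamma> t)) at_infinity (at_left 1)" by (simp add: q_def)
      then show "metric_length g (deriv g) \<gamma> = \<infinity>"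
        using h ana by (intro complete_if_tends) (auto simp: M_def)
    qed
  qed
  have "weierstrass_data_on_M g (deriv g)"
    unfolding weierstrass_data_on_M_def using hol per assms(2) by blast
  with ends show ?thesis by blast
qed

end
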